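(* Let $S$ be a reflective numerical semigroup with $\mathrm{g}(S)=g\ge1$ and $\mathrm{m}(S)=a$, and let $r\in\{1,\dots,a-1\}$ be the integer with $g\equiv r\pmod a$ (such $r$ exists since $a\nmid g$). Then $\mathrm{F}(S)=2g-r$.
   Context: A numerical semigroup is a submonoid $S$ of $(\mathbb{N}_0,+)$ with finite complement. Its set of gaps is $\mathrm{H}(S)=\mathbb{N}_0\setminus S$, its genus is $\mathrm{g}(S)=\#\mathrm{H}(S)$, its Frobenius number (when $\mathrm{g}(S)\ge1$) is $\mathrm{F}(S)=\max \mathrm{H}(S)$, and its multiplicity $\mathrm{m}(S)$ is the smallest positive element of $S$. A numerical semigroup $S$ of genus $g\ge1$ is called reflective if for every $z\in\{0,1,\dots,g-1\}$ exactly one of $z$ and $z+g$ belongs to $S$. *)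

theory Defs
  imports Main
begin

definition numerical_semigroup :: "nat set \<Rightarrow> bool" where
  "numerical_semigroup S \<longleftrightarrow> 0 \<in> S \<and> (\<forall>x\<in>S. \<forall>y\<in>S. x + y \<in> S) \<and> finite (UNIV - S)"

definition gaps :: "nat set \<Rightarrow> nat set" where
  "gaps S = UNIV - S"

definition genus :: "nat set \<Rightarrow> nat" where
  "genus S = card (gaps S)"

definition frobenius :: "nat set \<Rightarrow> nat" where
  "frobenius S = Max (gaps S)"

definition multiplicity_ns :: "nat set \<Rightarrow> nat" where
  "multiplicity_ns S = (LEAST x. x \<in> S \<and> 0 < x)"

definition reflective :: "nat set \<Rightarrow> bool" where
  "reflective S \<longleftrightarrow> genus S \<ge> 1 \<and>
     (\<forall>z < genus S. (z \<in> S \<and> z + genus S \<notin> S) \<or> (z \<notin> S \<and> z + genus S \<in> S))"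

end

theory Submission
  imports Defs
begin

lemma mult_in:
  assumes "numerical_semigroup S" "a \<in> S" shows "k * a \<in> S"
  using assms by (induction k) (auto simp: numerical_semigroup_def)

lemma add_mult_in:
  assumes "numerical_semigroup S" "a \<in> S" "x \<in> S" shows "x + k * a \<in> S"
  using assms mult_in[OF assms(1,2)] by (auto simp: numerical_semigroup_def)

theorem mainTheorem3:
  fixes S :: "nat set"
  assumes "numerical_semigroup S"
    and "reflective S"
  shows "\<not> multiplicity_ns S dvd genus S \<and>
    (\<forall>r::nat. 1 \<le> r \<and> r \<le> multiplicity_ns S - 1 \<and>
       genus S mod multiplicity_ns S = r mod multiplicity_ns S
       \<longrightarrow> frobenius S = 2 * genus S - r)"
proof -
  define g where "g = genus S"
  define a where "a = multiplicity_ns S"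
  have ns: "0 \<in> S" "\<And>x y. x \<in> S \<Longrightarrow> y \<in> S \<Longrightarrow> x + y \<in> S" "finite (UNIV - S)"
    using assms(1) by (auto simp: numerical_semigroup_def)
  have g1: "g \<ge> 1" and refl: "\<And>z. z < g \<Longrightarrow> (z \<in> S \<and> z + g \<notin> S) \<or> (z \<notin> S \<and> z + g \<in> S)"
    using assms(2) by (auto simp: reflective_def g_def)
  have "\<exists>x. x \<notin> insert 0 (UNIV - S)"
    using ns(3) by (metis ex_new_if_finite finite_insert infinite_UNIV_nat)
  then obtain x where x: "x \<in> S" "0 < x" by auto
  have aS: "a \<in> S \<and> 0 < a" unfolding a_def multiplicity_ns_def
    by (rule LeastI[of _ x]) (use x in auto)
  have amin: "\<And>y. y \<in> S \<Longrightarrow> 0 < y \<Longrightarrow> a \<le> y" unfolding a_def multiplicity_ns_def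
    by (rule Least_le) auto
  have gS: "g \<notin> S" using refl[of 0] g1 ns(1) by auto
  have ndvd: "\<not> a dvd g"
  proof
    assume "a dvd g" then obtain k where "g = k * a" by (metis dvdE mult.commute)
    then show False using mult_in[OF assms(1), of a k] aS gS by auto
  qed
  define f where "f z = (if z \<in> S then z + g else z)" for z
  have fin: "finite (gaps S)" using ns(3) by (simp add: gaps_def)
  have fimg: "f ` {..<g} \<subseteq> gaps S" using refl by (auto simp: f_def gaps_def)
  have finj: "inj_on f {..<g}"
    unfolding inj_on_def f_def using refl by (auto split: if_splits)
  have "card (f ` {..<g}) = card (gaps S)" using card_image[OF finj] g_def genus_def by simp
  hence img: "f ` {..<g} = gaps S" using card_subset_eq[OF fin fimg] by simp
  have big: "\<And>y. y \<notin> S \<Longrightarrow> y < 2 * g"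
  proof -
    fix y assume "y \<notin> S"
    hence "y \<in> f ` {..<g}" using img by (simp add: gaps_def)
    thus "y < 2 * g" by (auto simp: f_def)
  qed
  have "\<forall>r::nat. 1 \<le> r \<and> r \<le> a - 1 \<and> g mod a = r mod a \<longrightarrow> frobenius S = 2 * g - r"
  proof (intro allI impI)
    fix r assume r: "1 \<le> r \<and> r \<le> a - 1 \<and> g mod a = r mod a"
    have "r < a" using r aS by linarith
    hence rg: "r = g mod a" using r by simp
    define q where "q = g div a"
    have gq: "g = q * a + r" using rg q_def by simp
    have qlt: "q * a < g" using gq r by simp
    have "q * a \<in> S" using mult_in[OF assms(1)] aS by simp
    moreover have e: "2 * g - r = q * a + g" using gq by simp
    ultimately have gap: "2 * g - r \<notin> S" using refl[OF qlt] by simp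
    have above: "\<And>y. y \<notin> S \<Longrightarrow> y \<le> 2 * g - r"
    proof (rule ccontr)
      fix y assume yS: "y \<notin> S" and "\<not> y \<le> 2 * g - r"
      define j where "j = y - (g + q * a)"
      have j: "y = g + q * a + j" "0 < j" "j < r"
        using big[OF yS] \<open>\<not> y \<le> 2 * g - r\<close> gq unfolding j_def by linarith+
      have jg: "j < g" using j gq by simp
      have "g + j \<notin> S"
      proof
        assume "g + j \<in> S"
        hence "g + j + q * a \<in> S" using add_mult_in[OF assms(1)] aS by blast
        moreover have "g + j + q * a = y" using j(1) by simp
        ultimately show False using yS by simp
      qed
      hence "j \<in> S" using refl[OF jg] by (auto simp: add.commute)
      hence "a \<le> j" using amin j by simp
      thus False using j \<open>r < a\<close> by linarith
    qed
    show "frobenius S = 2 * g - r" unfolding frobenius_def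
      by (rule Max_eqI[OF fin]) (use above gap in \<open>auto simp: gaps_def\<close>)
  qed
  thus ?thesis using ndvd by (simp add: a_def g_def)
qed

end
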